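(* Let $f,g$ be proper, closed, convex, $K\in\mathbb{R}^{n\times p}$, and let $\mu_f\ge0$, $\mu_{g^*}\ge0$ be such that $f-\tfrac{\mu_f}{2}\|\cdot\|^2$ and $g^*-\tfrac{\mu_{g^*}}{2}\|\cdot\|^2$ are convex. Let $\dot y\in\mathbb{R}^n$, $\hat x^k\in\mathbb{R}^p$, $x^k\in\mathrm{dom} f$, $L_k>0$, and $\beta_{k-1}\ge\beta_k>0$. Define $$y^{k+1}:=\mathrm{prox}_{g^*/\beta_k}\big(\dot y+\tfrac{1}{\beta_k}K\hat x^k\big),\qquad x^{k+1}:=\mathrm{prox}_{f/L_k}\big(\hat x^k-\tfrac{1}{L_k}K^\top y^{k+1}\big).$$ Then for every $x\in\mathrm{dom} f$ and every $\tau_k\in(0,1]$, $$\begin{aligned}F_{\beta_k}(x^{k+1},\dot y)\le{}&(1-\tau_k)F_{\beta_{k-1}}(x^k,\dot y)+\tau_k\mathcal{L}(x,y^{k+1})+\tfrac{L_k\tau_k^2}{2}\big\|\tfrac{1}{\tau_k}[\hat x^k-(1-\tau_k)x^k]-x\big\|^2\\&-\tfrac{\mu_f(1-\tau_k)\tau_k}{2}\|x-x^k\|^2-\tfrac{\tau_k^2}{2}(L_k+\mu_f)\big\|\tfrac{1}{\tau_k}[x^{k+1}-(1-\tau_k)x^k]-x\big\|^2\\&-\tfrac{L_k}{2}\|x^{k+1}-\hat x^k\|^2+\tfrac{1}{2(\mu_{g^*}+\beta_k)}\|K(x^{k+1}-\hat x^k)\|^2\\&-\tfrac{1-\tau_k}{2}\big[\tau_k\beta_k-(\beta_{k-1}-\beta_k)\big]\big\|\nabla_u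 g_{\beta_k}(Kx^k,\dot y)-\dot y\big\|^2.\end{aligned}$$
   Context: $g^*$ is the Fenchel conjugate of $g$; $\mathcal{L}(x,y):=f(x)+\langle Kx,y\rangle-g^*(y)$. For a proper closed convex $h$ and $\gamma>0$, $\mathrm{prox}_{\gamma h}(x):=\arg\min_{z}\{h(z)+\tfrac{1}{2\gamma}\|z-x\|^2\}$. For $\beta>0$, $g_\beta(u,\dot y):=\max_{y}\{\langle u,y\rangle-g^*(y)-\tfrac{\beta}{2}\|y-\dot y\|^2\}$, whose gradient in $u$ is $\nabla_u g_\beta(u,\dot y)=\mathrm{prox}_{g^*/\beta}(\dot y+\tfrac1\beta u)$, and $F_\beta(x,\dot y):=f(x)+g_\beta(Kx,\dot y)$. Norms are Euclidean. *)

theory Defs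
  imports "HOL-Analysis.Analysis"
begin

text \<open>Extended-real-valued functions on Euclidean spaces (value \<infinity> outside the domain).\<close>

definition edom :: "('a \<Rightarrow> ereal) \<Rightarrow> 'a set" where
  "edom h = {x. h x < \<infinity>}"

definition proper_fun :: "('a \<Rightarrow> ereal) \<Rightarrow> bool" where
  "proper_fun h \<longleftrightarrow> (\<forall>x. h x \<noteq> -\<infinity>) \<and> (\<exists>x. h x < \<infinity>)"

definition closed_fun :: "('a::topological_space \<Rightarrow> ereal) \<Rightarrow> bool" where
  "closed_fun h \<longleftrightarrow> closed {(x, t::real). h x \<le> ereal t}"

definition convex_fun :: "('a::real_vector \<Rightarrow> ereal) \<Rightarrow> bool" where
  "convex_fun h \<longleftrightarrow> (\<forall>x y t. 0 \<le> t \<and> t \<le> 1 \<longrightarrow>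
      h ((1 - t) *\<^sub>R x + t *\<^sub>R y) \<le> ereal (1 - t) * h x + ereal t * h y)"

definition fconj :: "('a::real_inner \<Rightarrow> ereal) \<Rightarrow> 'a \<Rightarrow> ereal" where
  "fconj g y = (SUP x. ereal (inner x y) - g x)"

definition prox :: "real \<Rightarrow> ('a::real_normed_vector \<Rightarrow> ereal) \<Rightarrow> 'a \<Rightarrow> 'a" where
  "prox \<gamma> h x = (THE z. \<forall>w. h z + ereal (norm (z - x)^2 / (2 * \<gamma>))
                            \<le> h w + ereal (norm (w - x)^2 / (2 * \<gamma>)))"

definition g_beta :: "('a::real_inner \<Rightarrow> ereal) \<Rightarrow> real \<Rightarrow> 'a \<Rightarrow> 'a \<Rightarrow> ereal" where
  "g_beta g \<beta> u yd = (SUP y. ereal (inner u y) - fconj g y - ereal (\<beta> / 2 * norm (y - yd)^2))"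

text \<open>Gradient in u of g_beta, given by the formula prox_{g*/\<beta>}(yd + u/\<beta>).\<close>
definition grad_g_beta :: "('a::real_inner \<Rightarrow> ereal) \<Rightarrow> real \<Rightarrow> 'a \<Rightarrow> 'a \<Rightarrow> 'a" where
  "grad_g_beta g \<beta> u yd = prox (1 / \<beta>) (fconj g) (yd + (1 / \<beta>) *\<^sub>R u)"

definition F_beta :: "(real^'p \<Rightarrow> ereal) \<Rightarrow> (real^'n \<Rightarrow> ereal) \<Rightarrow> real^'p^'n
                       \<Rightarrow> real \<Rightarrow> real^'p \<Rightarrow> real^'n \<Rightarrow> ereal" where
  "F_beta f g K \<beta> x yd = f x + g_beta g \<beta> (K *v x) yd"

definition Lag :: "(real^'p \<Rightarrow> ereal) \<Rightarrow> (real^'n \<Rightarrow> ereal) \<Rightarrow> real^'p^'n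
                    \<Rightarrow> real^'p \<Rightarrow> real^'n \<Rightarrow> ereal" where
  "Lag f g K x y = f x + ereal (inner (K *v x) y) - fconj g y"

end

theory Submission
  imports Defs
begin

lemma lsc_seq:
  fixes h :: "'a::metric_space \<Rightarrow> ereal"
  assumes "closed_fun h" "X \<longlonglongrightarrow> x" "T \<longlonglongrightarrow> t" "\<And>n. h (X n) \<le> ereal (T n)"
  shows "h x \<le> ereal t"
proof -
  have cl: "closed {(x, t::real). h x \<le> ereal t}" using assms(1) closed_fun_def by auto
  have "(\<lambda>n. (X n, T n)) \<longlonglongrightarrow> (x,t)" using assms by (intro tendsto_Pair)
  moreover have "\<And>n. (X n, T n) \<in> {(x, t::real). h x \<le> ereal t}" using assms(4) by auto
  ultimately have "(x,t) \<in> {(x, t::real). h x \<le> ereal t}" by (rule closed_sequentially[OF cl, rotated])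
  thus ?thesis by simp
qed

lemma lsc_compact_lb:
  fixes h :: "'a::metric_space \<Rightarrow> ereal"
  assumes cf: "closed_fun h" and nm: "\<And>x. h x \<noteq> -\<infinity>" and S: "compact S"
  shows "\<exists>c. \<forall>z\<in>S. ereal c \<le> h z"
proof (rule ccontr)
  assume "\<not> ?thesis"
  then have "\<forall>n::nat. \<exists>z\<in>S. h z < ereal (- real n)" by (metis not_le)
  then obtain z where zS: "\<And>n. z n \<in> S" and zh: "\<And>n. h (z n) < ereal (- real n)" by metis
  from compact_imp_seq_compact[OF S] zS obtain l r where lS: "l \<in> S" and r: "strict_mono r"
     and lim: "(z \<circ> r) \<longlonglongrightarrow> l"
    unfolding seq_compact_def by metis
  have le: "h l \<le> ereal c" for c
  proof -
    define N where "N = nat \<lceil>-c\<rceil>"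
    have lim2: "(\<lambda>k. z (r (k + N))) \<longlonglongrightarrow> l"
      using LIMSEQ_ignore_initial_segment[OF lim, of N] by (simp add: o_def)
    have "h (z (r (k + N))) \<le> ereal c" for k
    proof -
      have "r (k+N) \<ge> k + N" using seq_suble[OF r] by simp
      hence "- real (r (k+N)) \<le> c" unfolding N_def by linarith
      with zh[of "r (k+N)"] show ?thesis by (meson less_imp_le order_trans ereal_less_eq(3))
    qed
    then show ?thesis using lsc_seq[OF cf lim2 tendsto_const] by simp
  qed
  show False
  proof (cases "h l")
    case (real a) then show ?thesis using le[of "a - 1"] by simp
  next
    case PInf then show ?thesis using le[of 0] by simp
  next
    case MInf then show ?thesis using nm by simp
  qed
qed

lemma norm_comb_sq:
  fixes a b v :: "'a::real_inner"
  shows "norm ((1-t) *\<^sub>R a + t *\<^sub>R b - v)^2 = (1-t)*norm(a-v)^2 + t*norm(b-v)^2 - t*(1-t)*norm(a-b)^2"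
proof -
  have e1: "(1-t) *\<^sub>R a + t *\<^sub>R b - v = (1-t) *\<^sub>R (a - v) + t *\<^sub>R (b - v)" by (simp add: algebra_simps)
  have e2: "a - b = (a - v) - (b - v)" by simp
  show ?thesis unfolding e1 e2
    by (simp add: power2_norm_eq_inner inner_add_left inner_add_right inner_diff_left inner_diff_right inner_commute algebra_simps)
qed

lemma sconv:
  fixes h :: "'a::real_inner \<Rightarrow> ereal"
  assumes cv: "convex_fun (\<lambda>z. h z - ereal (\<mu>/2 * norm z^2))"
    and ha: "h a = ereal A" and hb: "h b = ereal B" and t: "0 \<le> t" "t \<le> 1"
  shows "h ((1-t) *\<^sub>R a + t *\<^sub>R b) \<le> ereal ((1-t)*A + t*B - \<mu>/2*t*(1-t)*norm(a-b)^2)"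
proof -
  let ?m = "(1-t) *\<^sub>R a + t *\<^sub>R b"
  have "h ?m - ereal (\<mu>/2*norm ?m^2) \<le> ereal (1-t) * (h a - ereal (\<mu>/2*norm a^2)) + ereal t * (h b - ereal (\<mu>/2*norm b^2))"
    using cv t unfolding convex_fun_def by blast
  also have "\<dots> = ereal ((1-t)*(A - \<mu>/2*norm a^2) + t*(B - \<mu>/2*norm b^2))" by (simp add: ha hb)
  finally have 1: "h ?m \<le> ereal ((1-t)*(A - \<mu>/2*norm a^2) + t*(B - \<mu>/2*norm b^2) + \<mu>/2*norm ?m^2)"
    by (cases "h ?m") auto
  have eq: "norm ?m^2 = (1-t)*norm a^2 + t*norm b^2 - t*(1-t)*norm(a-b)^2" using norm_comb_sq[of t a b 0] by simp
  have "(1-t)*(A - \<mu>/2*norm a^2) + t*(B - \<mu>/2*norm b^2) + \<mu>/2*norm ?m^2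
     = (1-t)*A + t*B - \<mu>/2*t*(1-t)*norm(a-b)^2" unfolding eq by (simp add: field_simps)
  then show ?thesis using 1 by simp
qed

lemma minorant:
  fixes h :: "'a::euclidean_space \<Rightarrow> ereal"
  assumes cf: "closed_fun h" and nm: "\<And>x. h x \<noteq> -\<infinity>"
    and cv: "convex_fun (\<lambda>z. h z - ereal (\<mu>/2*norm z^2))" and mu: "\<mu> \<ge> 0"
    and x0: "h x0 = ereal a"
  shows "\<exists>c B. B \<ge> 0 \<and> (\<forall>z. ereal (c - B * norm (z - x0)) \<le> h z)"
proof -
  obtain c where c: "\<And>z. z \<in> cball x0 1 \<Longrightarrow> ereal c \<le> h z"
    using lsc_compact_lb[OF cf nm compact_cball] by blast
  have ca: "c \<le> a" using c[of x0] x0 by simp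
  have "ereal (c - (a - c) * norm (z - x0)) \<le> h z" for z
  proof (cases "norm (z - x0) \<le> 1")
    case True
    then have "ereal c \<le> h z" using c by (simp add: dist_norm norm_minus_commute)
    moreover have "c - (a-c)*norm(z-x0) \<le> c" using ca by simp
    ultimately show ?thesis by (meson ereal_less_eq(3) order_trans)
  next
    case False
    show ?thesis
    proof (cases "h z")
      case (real b)
      define s where "s = norm (z - x0)"
      define t where "t = 1/s"
      have s1: "s > 1" using False s_def by simp
      have t01: "0 \<le> t" "t \<le> 1" using s1 by (auto simp: t_def)
      have st: "s * t = 1" using s1 by (simp add: t_def)
      let ?m = "(1-t) *\<^sub>R x0 + t *\<^sub>R z"
      have "?m - x0 = t *\<^sub>R (z - x0)" by (simp add: algebra_simps)
      hence "norm (?m - x0) = 1" using s1 t01 by (auto simp: t_def s_def)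
      hence "ereal c \<le> h ?m" using c by (simp add: dist_norm norm_minus_commute)
      also have "\<dots> \<le> ereal ((1-t)*a + t*b - \<mu>/2*t*(1-t)*norm(x0-z)^2)" using sconv[OF cv x0 real t01] .
      finally have "c \<le> (1-t)*a + t*b - \<mu>/2*t*(1-t)*norm(x0-z)^2" by simp
      moreover have "\<mu>/2*t*(1-t)*norm(x0-z)^2 \<ge> 0" using mu t01 by simp
      ultimately have "c \<le> (1-t)*a + t*b" by linarith
      hence "s*c \<le> s*((1-t)*a + t*b)" using s1 by (simp add: mult_left_mono)
      also have "\<dots> = (s - 1)*a + b" using st by (simp add: algebra_simps)
      finally have "s*c \<le> (s - 1)*a + b" .
      moreover have "c - (a - c) * s = s*c - (s-1)*a - (a - c)" by (simp add: algebra_simps)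
      ultimately have "c - (a - c) * s \<le> b" using ca by linarith
      then show ?thesis using real s_def by simp
    next
      case PInf then show ?thesis by simp
    next
      case MInf then show ?thesis using nm by simp
    qed
  qed
  then show ?thesis using ca by (intro exI[of _ c] exI[of _ "a - c"]) auto
qed

lemma ereal_add_lt_D:
  assumes "x + ereal q < ereal M" "x \<noteq> -\<infinity>"
  shows "x \<le> ereal (M - q)"
  using assms by (cases x) auto

lemma fconj_closed:
  fixes g :: "'a::real_inner \<Rightarrow> ereal"
  assumes nm: "\<And>x. g x \<noteq> -\<infinity>"
  shows "closed_fun (fconj g)"
proof -
  have eq: "{(y, t::real). fconj g y \<le> ereal t} = (\<Inter>x. {(y,t). ereal (inner x y) - g x \<le> ereal t})"
    unfolding fconj_def by (auto simp: SUP_le_iff)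
  have "closed {(y,t::real). ereal (inner x y) - g x \<le> ereal t}" for x
  proof (cases "g x")
    case (real a)
    have "{(y,t::real). ereal (inner x y) - g x \<le> ereal t} = {p. inner x (fst p) - a \<le> snd p}"
      using real by auto
    moreover have "closed {p::'a\<times>real. inner x (fst p) - a \<le> snd p}"
      by (intro closed_Collect_le continuous_intros)
    ultimately show ?thesis by simp
  next
    case PInf
    then have "{(y,t::real). ereal (inner x y) - g x \<le> ereal t} = UNIV" by auto
    then show ?thesis by simp
  next
    case MInf then show ?thesis using nm by simp
  qed
  then show ?thesis unfolding closed_fun_def eq by (intro closed_INT) auto
qed

lemma psi_ge_h:
  assumes "q \<ge> 0" "x \<noteq> -\<infinity>"
  shows "x \<le> x + ereal q"
  using assms by (cases x) auto

lemma prox_exists: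
  fixes h :: "'a::euclidean_space \<Rightarrow> ereal"
  assumes cf: "closed_fun h" and nm: "\<And>x. h x \<noteq> -\<infinity>"
    and cv: "convex_fun (\<lambda>z. h z - ereal (\<mu>/2*norm z^2))" and mu: "\<mu> \<ge> 0"
    and x0: "h x0 = ereal a" and g: "\<gamma> > 0"
  shows "h (prox \<gamma> h v) < \<infinity> \<and> (\<forall>w. h (prox \<gamma> h v) + ereal (norm (prox \<gamma> h v - v)^2/(2*\<gamma>))
            \<le> h w + ereal (norm (w - v)^2/(2*\<gamma>)))"
proof -
  define q where "q z = norm (z - v)^2/(2*\<gamma>)" for z
  define \<psi> where "\<psi> z = h z + ereal (q z)" for z
  have q0: "q z \<ge> 0" for z using g by (simp add: q_def)
  have psih: "h z \<le> \<psi> z" for z unfolding \<psi>_def by (rule psi_ge_h[OF q0 nm])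
  obtain c B where B: "B \<ge> 0" and cB: "\<And>z. ereal (c - B * norm (z - x0)) \<le> h z"
    using minorant[OF cf nm cv mu x0] by blast
  define E where "E = a + q x0"
  have psx0: "\<psi> x0 = ereal E" by (simp add: \<psi>_def E_def x0)
  define d where "d = norm (x0 - v)"
  define M where "M = \<bar>E - c + B*d\<bar>"
  define R where "R = d + max 1 (2*\<gamma>*(B + M + 1))"
  have M0: "M \<ge> 0" by (simp add: M_def)
  have d0: "d \<ge> 0" by (simp add: d_def)
  have R0: "R \<ge> 0" using d0 by (simp add: R_def)
  have far: "\<psi> z > ereal E" if zR: "norm (z - x0) > R" for z
  proof (cases "h z")
    case (real hz)
    define r where "r = norm (z - x0)"
    define s where "s = r - d"
    have s1: "s \<ge> 1" "s \<ge> 2*\<gamma>*(B+M+1)" using zR by (auto simp: s_def r_def R_def)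
    have hz: "c - B*r \<le> hz" using cB[of z] real r_def by simp
    have "z - x0 = (z - v) + (v - x0)" by simp
    hence "r \<le> norm (z - v) + norm (v - x0)" unfolding r_def by (metis norm_triangle_ineq)
    hence "s \<le> norm (z - v)" by (simp add: s_def d_def norm_minus_commute)
    hence "s^2 \<le> norm (z - v)^2" using s1 by (intro power_mono) auto
    hence qz: "s^2/(2*\<gamma>) \<le> q z" using g by (simp add: q_def divide_right_mono)
    have "s/(2*\<gamma>) \<ge> B + M + 1" using s1 g by (simp add: field_simps)
    hence "s * (s/(2*\<gamma>)) \<ge> s * (B + M + 1)" using s1 by (intro mult_left_mono) auto
    moreover have "s^2/(2*\<gamma>) = s * (s/(2*\<gamma>))" by (simp add: power2_eq_square)
    moreover have "(s - 1)*(M+1) \<ge> 0" using s1 M0 by simp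
    moreover have "s * (B + M + 1) = B * s + (s-1)*(M+1) + M + 1" by (simp add: algebra_simps)
    moreover have "E \<le> M + c - B*d" unfolding M_def by linarith
    moreover have "B * r = B * s + B * d" by (simp add: s_def algebra_simps)
    ultimately have "E < hz + q z" using qz hz by linarith
    then show ?thesis by (simp add: \<psi>_def real)
  next
    case PInf then show ?thesis by (simp add: \<psi>_def)
  next
    case MInf then show ?thesis using nm by simp
  qed
  define C where "C = cball x0 R"
  have x0C: "x0 \<in> C" using R0 by (simp add: C_def)
  define m where "m = (INF z\<in>C. \<psi> z)"
  have mle: "m \<le> ereal E" unfolding m_def using x0C psx0 by (metis INF_lower)
  have mge: "ereal (c - B*R) \<le> m" unfolding m_def
  proof (rule INF_greatest)
    fix z assume "z \<in> C"
    hence "norm (z - x0) \<le> R" by (simp add: C_def dist_norm norm_minus_commute)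
    hence "c - B*R \<le> c - B * norm (z - x0)" using B by (simp add: mult_left_mono)
    hence "ereal (c - B*R) \<le> h z" using cB[of z] by (meson ereal_less_eq(3) order_trans)
    thus "ereal (c - B*R) \<le> \<psi> z" using psih[of z] by (rule order_trans)
  qed
  obtain m' where m': "m = ereal m'" using mle mge by (cases m) auto
  have "\<forall>n. \<exists>z\<in>C. \<psi> z < ereal (m' + inverse (real (Suc n)))"
  proof
    fix n
    have "m < ereal (m' + inverse (real (Suc n)))" using m' by simp
    thus "\<exists>z\<in>C. \<psi> z < ereal (m' + inverse (real (Suc n)))" unfolding m_def by (simp add: INF_less_iff)
  qed
  then obtain zs where zsC: "\<And>n. zs n \<in> C" and zsp: "\<And>n. \<psi> (zs n) < ereal (m' + inverse (real (Suc n)))"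
    by metis
  have "compact C" by (simp add: C_def)
  from compact_imp_seq_compact[OF this] zsC obtain l r where lC: "l \<in> C" and r: "strict_mono r"
     and lim: "(zs \<circ> r) \<longlonglongrightarrow> l"
    unfolding seq_compact_def by metis
  have limi: "(\<lambda>k. inverse (real (Suc (r k)))) \<longlonglongrightarrow> 0"
    using LIMSEQ_subseq_LIMSEQ[OF LIMSEQ_inverse_real_of_nat r] by (simp add: o_def)
  have limq: "(\<lambda>k. q ((zs \<circ> r) k)) \<longlonglongrightarrow> q l"
    unfolding q_def using g by (intro tendsto_intros lim) auto
  have limT: "(\<lambda>k. m' + inverse (real (Suc (r k))) - q ((zs \<circ> r) k)) \<longlonglongrightarrow> m' + 0 - q l"
    by (intro tendsto_intros limi limq)
  have hle: "h l \<le> ereal (m' + 0 - q l)"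
  proof (rule lsc_seq[OF cf lim limT])
    fix k
    show "h ((zs \<circ> r) k) \<le> ereal (m' + inverse (real (Suc (r k))) - q ((zs \<circ> r) k))"
      using ereal_add_lt_D[OF zsp[of "r k", unfolded \<psi>_def] nm] by simp
  qed
  have psl: "\<psi> l \<le> ereal m'" using hle nm[of l] unfolding \<psi>_def by (cases "h l") auto
  have minl: "\<psi> l \<le> \<psi> w" for w
  proof (cases "w \<in> C")
    case True
    hence "m \<le> \<psi> w" unfolding m_def by (rule INF_lower)
    thus ?thesis using psl m' by simp
  next
    case False
    hence "norm (w - x0) > R" by (simp add: C_def dist_norm norm_minus_commute)
    hence "ereal E < \<psi> w" by (rule far)
    moreover have "m' \<le> E" using mle m' by simp
    ultimately show ?thesis using psl by (meson ereal_less_eq(3) order_trans less_imp_le)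
  qed
  have hl_fin: "h l < \<infinity>"
  proof -
    have "\<psi> l \<le> ereal E" using minl[of x0] psx0 by simp
    thus ?thesis unfolding \<psi>_def by (cases "h l") auto
  qed
  have uniq: "p = l" if pmin: "\<forall>w. \<psi> p \<le> \<psi> w" for p
  proof -
    have eqv: "\<psi> p = \<psi> l" using pmin minl by (simp add: antisym)
    obtain Lv where hl: "h l = ereal Lv" using hl_fin nm[of l] by (cases "h l") auto
    obtain P where hp: "h p = ereal P" using eqv hl nm[of p] unfolding \<psi>_def by (cases "h p") auto
    define D where "D = norm (p - l)^2"
    let ?mid = "(1 - 1/2) *\<^sub>R p + (1/2::real) *\<^sub>R l"
    have hm: "h ?mid \<le> ereal ((1-1/2)*P + (1/2)*Lv - \<mu>/2*(1/2)*(1-1/2)*norm(p-l)^2)"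
      using sconv[OF cv hp hl, of "1/2"] by simp
    have n: "norm (?mid - v)^2 = (1-1/2)*norm(p-v)^2 + (1/2)*norm(l-v)^2 - (1/2)*(1-1/2)*norm(p-l)^2"
      by (rule norm_comb_sq)
    have qm: "q ?mid = q p/2 + q l/2 - D/(8*\<gamma>)"
      unfolding q_def D_def n using g by (simp add: field_simps)
    have "\<psi> p \<le> \<psi> ?mid" using pmin by blast
    hence "P + q p \<le> ((1-1/2)*P + (1/2)*Lv - \<mu>/2*(1/2)*(1-1/2)*norm(p-l)^2) + q ?mid"
      using hm unfolding \<psi>_def hp by (cases "h ?mid") auto
    moreover have "P + q p = Lv + q l" using eqv unfolding \<psi>_def hp hl by simp
    moreover have "\<mu>/2*(1/2)*(1-1/2)*norm(p-l)^2 \<ge> 0" using mu by simp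
    ultimately have "D/(8*\<gamma>) \<le> 0" unfolding qm
      by argo
    hence "D \<le> 0" using g by (simp add: divide_le_0_iff)
    thus "p = l" unfolding D_def by simp
  qed
  have pe: "prox \<gamma> h v = l"
    unfolding prox_def
  proof (rule the_equality)
    show "\<forall>w. h l + ereal (norm (l - v)^2 / (2*\<gamma>)) \<le> h w + ereal (norm (w - v)^2 / (2*\<gamma>))"
      using minl unfolding \<psi>_def q_def by blast
  next
    fix z assume "\<forall>w. h z + ereal (norm (z - v)^2 / (2*\<gamma>)) \<le> h w + ereal (norm (w - v)^2 / (2*\<gamma>))"
    thus "z = l" using uniq unfolding \<psi>_def q_def by blast
  qed
  show ?thesis unfolding pe using hl_fin minl unfolding \<psi>_def q_def by blast
qed

lemma prox_strong:
  fixes h :: "'a::real_inner \<Rightarrow> ereal"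
  assumes cv: "convex_fun (\<lambda>z. h z - ereal (\<mu>/2*norm z^2))" and mu: "\<mu> \<ge> 0" and g: "\<gamma> > 0"
    and opt: "\<forall>w. h p + ereal (norm (p - v)^2/(2*\<gamma>)) \<le> h w + ereal (norm (w - v)^2/(2*\<gamma>))"
    and hp: "h p = ereal A" and hw: "h w = ereal W"
  shows "A + norm (p - v)^2/(2*\<gamma>) + (\<mu>/2 + 1/(2*\<gamma>)) * norm (w - p)^2 \<le> W + norm (w - v)^2/(2*\<gamma>)"
proof -
  define k where "k = \<mu>/2 + 1/(2*\<gamma>)"
  define D where "D = norm (p - w)^2"
  define qp where "qp = norm (p - v)^2/(2*\<gamma>)"
  define qw where "qw = norm (w - v)^2/(2*\<gamma>)"
  have k0: "k \<ge> 0" "D \<ge> 0" using mu g by (auto simp: k_def D_def)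
  have key: "A + qp \<le> W + qw - k*(1-t)*D" if t: "0 < t" "t \<le> 1" for t
  proof -
    let ?m = "(1-t) *\<^sub>R p + t *\<^sub>R w"
    have hm: "h ?m \<le> ereal ((1-t)*A + t*W - \<mu>/2*t*(1-t)*D)"
      using sconv[OF cv hp hw, of t] t unfolding D_def by simp
    have n: "norm (?m - v)^2 = (1-t)*norm(p-v)^2 + t*norm(w-v)^2 - t*(1-t)*norm(p-w)^2"
      by (rule norm_comb_sq)
    have qm: "norm (?m - v)^2/(2*\<gamma>) = (1-t)*qp + t*qw - t*(1-t)*D/(2*\<gamma>)"
      unfolding n qp_def qw_def D_def using g by (simp add: field_simps)
    have "h p + ereal qp \<le> h ?m + ereal (norm (?m - v)^2/(2*\<gamma>))" using opt unfolding qp_def by blast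
    hence "A + qp \<le> (1-t)*A + t*W - \<mu>/2*t*(1-t)*D + ((1-t)*qp + t*qw - t*(1-t)*D/(2*\<gamma>))"
      using hm unfolding qm hp by (cases "h ?m") auto
    moreover have "(1-t)*A + t*W - \<mu>/2*t*(1-t)*D + ((1-t)*qp + t*qw - t*(1-t)*D/(2*\<gamma>)) - (A+qp)
        = t*(W + qw - k*(1-t)*D) - t*(A + qp)"
      unfolding k_def using g by (simp add: field_simps)
    ultimately have "t*(A + qp) \<le> t*(W + qw - k*(1-t)*D)" by linarith
    thus ?thesis using t by simp
  qed
  show ?thesis
  proof (rule ccontr)
    assume "\<not> ?thesis"
    hence dpos: "A + qp + k*D - (W + qw) > 0"
      unfolding k_def D_def qp_def qw_def by (simp add: norm_minus_commute)
    define \<delta> where "\<delta> = A + qp + k*D - (W + qw)"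
    have kD: "k*D \<ge> 0" using k0 by simp
    define t where "t = min 1 (\<delta>/(2*(k*D+1)))"
    have t01: "0 < t" "t \<le> 1" using dpos kD by (auto simp: t_def \<delta>_def)
    have "A + qp \<le> W + qw - k*(1-t)*D" by (rule key[OF t01])
    moreover have "k*(1-t)*D = k*D - t*(k*D)" by (simp add: algebra_simps)
    ultimately have 1: "\<delta> \<le> t*(k*D)" unfolding \<delta>_def by linarith
    have "t*(k*D) \<le> \<delta>/(2*(k*D+1)) * (k*D)" using kD by (intro mult_right_mono) (auto simp: t_def)
    also have "\<dots> = \<delta> * ((k*D)/(2*(k*D+1)))" by simp
    also have "\<dots> < \<delta> * 1"
    proof (rule mult_strict_left_mono)
      show "(k*D)/(2*(k*D+1)) < 1" using kD by (simp add: field_simps)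
      show "0 < \<delta>" using dpos unfolding \<delta>_def .
    qed
    finally show False using 1 by simp
  qed
qed

lemma norm_diff_sq:
  fixes a b :: "'a::real_inner"
  shows "norm (a - b)^2 = norm a^2 - 2*inner a b + norm b^2"
  by (simp add: power2_norm_eq_inner inner_diff_left inner_diff_right inner_commute)

lemma sq_shift:
  fixes y c u :: "'a::real_inner"
  assumes b: "\<beta> > 0"
  shows "norm (y - (c + (1/\<beta>) *\<^sub>R u))^2/(2*(1/\<beta>)) = \<beta>/2*norm(y - c)^2 - inner u (y - c) + norm u^2/(2*\<beta>)"
proof -
  have e0: "y - (c + (1/\<beta>) *\<^sub>R u) = (y - c) - (1/\<beta>) *\<^sub>R u" by simp
  have e: "norm ((y - c) - (1/\<beta>) *\<^sub>R u)^2 = norm (y-c)^2 - 2*(1/\<beta>) * inner u (y - c) + (1/\<beta>)^2 * norm u^2"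
    unfolding norm_diff_sq[of "y - c"] using b by (simp add: power_mult_distrib inner_commute power_divide)
  show ?thesis unfolding e0 e using b by (simp add: field_simps power2_eq_square)
qed

lemma sq_shift_minus:
  fixes y c u :: "'a::real_inner"
  assumes b: "\<beta> > 0"
  shows "norm (y - (c - (1/\<beta>) *\<^sub>R u))^2/(2*(1/\<beta>)) = \<beta>/2*norm(y - c)^2 + inner u (y - c) + norm u^2/(2*\<beta>)"
  using sq_shift[OF b, of y c "-u"] by simp

lemma dual_aux:
  fixes y s yd u :: "'a::real_inner"
  assumes b: "\<beta> > 0"
    and H: "GS + norm (s - (yd + (1/\<beta>) *\<^sub>R u))^2/(2*(1/\<beta>)) + (\<mu>/2 + 1/(2*(1/\<beta>))) * norm (y - s)^2
            \<le> W + norm (y - (yd + (1/\<beta>) *\<^sub>R u))^2/(2*(1/\<beta>))"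
  shows "inner u y - W - \<beta>/2*norm(y - yd)^2 + (\<mu>+\<beta>)/2 * norm (y - s)^2 \<le> inner u s - GS - \<beta>/2*norm(s-yd)^2"
proof -
  have k: "(\<mu>/2 + 1/(2*(1/\<beta>))) = (\<mu>+\<beta>)/2" by simp
  have "GS + (\<beta>/2*norm(s - yd)^2 - inner u (s - yd) + norm u^2/(2*\<beta>)) + (\<mu>+\<beta>)/2 * norm (y - s)^2
      \<le> W + (\<beta>/2*norm(y - yd)^2 - inner u (y - yd) + norm u^2/(2*\<beta>))"
    using H unfolding sq_shift[OF b] k .
  then show ?thesis by (simp add: inner_diff_right)
qed

lemma young_inner:
  fixes d w :: "'a::real_inner"
  assumes c: "c > 0"
  shows "inner d w \<le> c/2*norm w^2 + norm d^2/(2*c)"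
proof -
  have "0 \<le> norm (c *\<^sub>R w - d)^2" by simp
  also have "\<dots> = c^2 * norm w^2 - 2*c*inner d w + norm d^2"
    unfolding norm_diff_sq by (simp add: power_mult_distrib inner_commute)
  finally have "2*c*inner d w \<le> c^2 * norm w^2 + norm d^2" by simp
  hence "(2*c*inner d w)/(2*c) \<le> (c^2 * norm w^2 + norm d^2)/(2*c)" using c by (intro divide_right_mono) auto
  thus ?thesis using c by (simp add: field_simps power2_eq_square)
qed

lemma final_real:
  fixes FX1 FZ FK FX GY1 GYS S a b c e nd nz nzx1 nx1 nkx n1 n2 n3 L \<mu>f \<mu>g \<beta> \<beta>prev \<tau> :: real
  assumes A: "FX1 + L/2*nx1 + e + (\<mu>f+L)/2*nzx1 \<le> FZ + L/2*nz + ((1-\<tau>)*a + \<tau>*b - c)"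
    and B: "FZ \<le> (1-\<tau>)*FK + \<tau>*FX - \<mu>f/2*\<tau>*(1-\<tau>)*nkx"
    and D: "a - GY1 - \<beta>/2*n2 + (\<mu>g+\<beta>)/2*n1 \<le> S - GYS - \<beta>/2*n3"
    and IV: "\<tau>*(1-\<tau>)*n3 \<le> (1-\<tau>)*n1 + \<tau>*n2"
    and t: "\<tau> \<le> 1" and bp: "\<beta> > 0" and mg: "\<mu>g \<ge> 0" and n1: "n1 \<ge> 0"
  shows "FX1 + (c - GY1 - \<beta>/2*n2 + e + nd/(2*(\<mu>g+\<beta>)))
     \<le> (1-\<tau>)*(FK + (S - GYS - \<beta>prev/2*n3)) + \<tau>*(FX + b - GY1)
        + (L/2*nz - \<mu>f*(1-\<tau>)*\<tau>/2*nkx - (L+\<mu>f)/2*nzx1 - L/2*nx1 + nd/(2*(\<mu>g+\<beta>))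
           - (1-\<tau>)/2*(\<tau>*\<beta> - (\<beta>prev-\<beta>))*n3)"
proof -
  have D': "0 \<le> (1-\<tau>)*((S - GYS - \<beta>/2*n3) - (a - GY1 - \<beta>/2*n2 + (\<mu>g+\<beta>)/2*n1))"
    using D t by (intro mult_nonneg_nonneg) auto
  have IV': "0 \<le> \<beta>/2*((1-\<tau>)*n1 + \<tau>*n2 - \<tau>*(1-\<tau>)*n3)"
    using IV bp by (intro mult_nonneg_nonneg) auto
  have N1: "0 \<le> (1-\<tau>)*(\<mu>g/2*n1)" using t mg n1 by simp
  have eq: "((1-\<tau>)*(FK + (S - GYS - \<beta>prev/2*n3)) + \<tau>*(FX + b - GY1)
        + (L/2*nz - \<mu>f*(1-\<tau>)*\<tau>/2*nkx - (L+\<mu>f)/2*nzx1 - L/2*nx1 + nd/(2*(\<mu>g+\<beta>))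
           - (1-\<tau>)/2*(\<tau>*\<beta> - (\<beta>prev-\<beta>))*n3))
      - (FX1 + (c - GY1 - \<beta>/2*n2 + e + nd/(2*(\<mu>g+\<beta>))))
      = (FZ + L/2*nz + ((1-\<tau>)*a + \<tau>*b - c) - (FX1 + L/2*nx1 + e + (\<mu>f+L)/2*nzx1))
        + ((1-\<tau>)*FK + \<tau>*FX - \<mu>f/2*\<tau>*(1-\<tau>)*nkx - FZ)
        + (1-\<tau>)*((S - GYS - \<beta>/2*n3) - (a - GY1 - \<beta>/2*n2 + (\<mu>g+\<beta>)/2*n1))
        + \<beta>/2*((1-\<tau>)*n1 + \<tau>*n2 - \<tau>*(1-\<tau>)*n3)
        + (1-\<tau>)*(\<mu>g/2*n1)"
    by (simp add: field_simps)
  show ?thesis using eq A B D' IV' N1 by linarith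
qed

lemma transpose_inner:
  fixes K :: "real^'p^'n" and y :: "real^'n" and w :: "real^'p"
  shows "inner (transpose K *v y) w = inner y (K *v w)"
  by (metis vector_transpose_matrix transpose_transpose dot_lmul_matrix)

theorem lemma2:
  fixes f :: "real^'p \<Rightarrow> ereal" and g :: "real^'n \<Rightarrow> ereal" and K :: "real^'p^'n"
    and \<mu>f \<mu>g L \<beta>prev \<beta> \<tau> :: real
    and yd :: "real^'n" and xhat xk x x1 :: "real^'p" and y1 :: "real^'n"
  assumes "proper_fun f" "closed_fun f" "convex_fun f"
    and "proper_fun g" "closed_fun g" "convex_fun g"
    and "\<mu>f \<ge> 0" and "\<mu>g \<ge> 0"
    and "convex_fun (\<lambda>z. f z - ereal (\<mu>f / 2 * norm z ^ 2))"
    and "convex_fun (\<lambda>y. fconj g y - ereal (\<mu>g / 2 * norm y ^ 2))"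
    and "xk \<in> edom f" and "L > 0" and "\<beta>prev \<ge> \<beta>" and "\<beta> > 0"
    and y1_def: "y1 = prox (1 / \<beta>) (fconj g) (yd + (1 / \<beta>) *\<^sub>R (K *v xhat))"
    and x1_def: "x1 = prox (1 / L) f (xhat - (1 / L) *\<^sub>R (transpose K *v y1))"
    and "x \<in> edom f" and "0 < \<tau>" and "\<tau> \<le> 1"
  shows "F_beta f g K \<beta> x1 yd \<le>
           ereal (1 - \<tau>) * F_beta f g K \<beta>prev xk yd + ereal \<tau> * Lag f g K x y1
         + ereal (L * \<tau>^2 / 2 * norm ((1 / \<tau>) *\<^sub>R (xhat - (1 - \<tau>) *\<^sub>R xk) - x) ^ 2
             - \<mu>f * (1 - \<tau>) * \<tau> / 2 * norm (x - xk) ^ 2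
             - \<tau>^2 / 2 * (L + \<mu>f) * norm ((1 / \<tau>) *\<^sub>R (x1 - (1 - \<tau>) *\<^sub>R xk) - x) ^ 2
             - L / 2 * norm (x1 - xhat) ^ 2
             + 1 / (2 * (\<mu>g + \<beta>)) * norm (K *v (x1 - xhat)) ^ 2
             - (1 - \<tau>) / 2 * (\<tau> * \<beta> - (\<beta>prev - \<beta>)) * norm (grad_g_beta g \<beta> (K *v xk) yd - yd) ^ 2)"
proof -
  note cvf = assms(9) and cvg = assms(10)
  have fnm: "\<And>z. f z \<noteq> -\<infinity>" using assms(1) by (auto simp: proper_fun_def)
  have gnm: "\<And>z. g z \<noteq> -\<infinity>" using assms(4) by (auto simp: proper_fun_def)
  obtain FK where fk: "f xk = ereal FK" using \<open>xk \<in> edom f\<close> fnm[of xk] by (cases "f xk") (auto simp: edom_def)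
  obtain FX where fx: "f x = ereal FX" using \<open>x \<in> edom f\<close> fnm[of x] by (cases "f x") (auto simp: edom_def)
  define vx where "vx = xhat - (1/L) *\<^sub>R (transpose K *v y1)"
  have Lp: "1/L > 0" using \<open>L > 0\<close> by simp
  have px: "f x1 < \<infinity> \<and> (\<forall>w. f x1 + ereal (norm (x1 - vx)^2/(2*(1/L))) \<le> f w + ereal (norm (w - vx)^2/(2*(1/L))))"
    unfolding x1_def vx_def by (rule prox_exists[OF assms(2) fnm cvf \<open>\<mu>f \<ge> 0\<close> fk Lp])
  obtain FX1 where fx1: "f x1 = ereal FX1" using px fnm[of x1] by (cases "f x1") auto
  show ?thesis
  proof (cases "\<exists>y. fconj g y < \<infinity>")
    case False
    have ginf: "fconj g y = \<infinity>" for y using False by (cases "fconj g y") auto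
    have "g_beta g \<beta> (K *v x1) yd = -\<infinity>" unfolding g_beta_def ginf by simp
    then have "F_beta f g K \<beta> x1 yd = -\<infinity>" by (simp add: F_beta_def fx1)
    thus ?thesis by simp
  next
    case True
    then obtain y0 where y0: "fconj g y0 < \<infinity>" by blast
    obtain x0 where x0: "g x0 < \<infinity>" using assms(4) by (auto simp: proper_fun_def)
    obtain a0 where a0: "g x0 = ereal a0" using x0 gnm[of x0] by (cases "g x0") auto
    have gsnm: "\<And>y. fconj g y \<noteq> -\<infinity>"
    proof -
      fix y
      have "ereal (inner x0 y) - g x0 \<le> fconj g y" unfolding fconj_def by (rule SUP_upper) simp
      thus "fconj g y \<noteq> -\<infinity>" using a0 by auto
    qed
    obtain G0 where G0: "fconj g y0 = ereal G0" using y0 gsnm[of y0] by (cases "fconj g y0") auto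
    have gcl: "closed_fun (fconj g)" by (rule fconj_closed[OF gnm])
    have bp: "1/\<beta> > 0" using \<open>\<beta> > 0\<close> by simp
    define v1 where "v1 = yd + (1/\<beta>) *\<^sub>R (K *v xhat)"
    have py1: "fconj g y1 < \<infinity> \<and> (\<forall>w. fconj g y1 + ereal (norm (y1 - v1)^2/(2*(1/\<beta>))) \<le> fconj g w + ereal (norm (w - v1)^2/(2*(1/\<beta>))))"
      unfolding y1_def v1_def by (rule prox_exists[OF gcl gsnm cvg \<open>\<mu>g \<ge> 0\<close> G0 bp])
    obtain GY1 where gy1: "fconj g y1 = ereal GY1" using py1 gsnm[of y1] by (cases "fconj g y1") auto
    define ys where "ys = grad_g_beta g \<beta> (K *v xk) yd"
    define vs where "vs = yd + (1/\<beta>) *\<^sub>R (K *v xk)"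
    have pys: "fconj g ys < \<infinity> \<and> (\<forall>w. fconj g ys + ereal (norm (ys - vs)^2/(2*(1/\<beta>))) \<le> fconj g w + ereal (norm (w - vs)^2/(2*(1/\<beta>))))"
      unfolding ys_def vs_def grad_g_beta_def by (rule prox_exists[OF gcl gsnm cvg \<open>\<mu>g \<ge> 0\<close> G0 bp])
    obtain GYS where gys: "fconj g ys = ereal GYS" using pys gsnm[of ys] by (cases "fconj g ys") auto
    define u where "u = K *v xhat"
    define uk where "uk = K *v xk"
    define d where "d = K *v (x1 - xhat)"
    define z where "z = (1-\<tau>) *\<^sub>R xk + \<tau> *\<^sub>R x"
    have t01: "0 \<le> \<tau>" "\<tau> \<le> 1" using \<open>0 < \<tau>\<close> \<open>\<tau> \<le> 1\<close> by auto
    have fz_le: "f z \<le> ereal ((1-\<tau>)*FK + \<tau>*FX - \<mu>f/2*\<tau>*(1-\<tau>)*norm(xk-x)^2)"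
      unfolding z_def by (rule sconv[OF cvf fk fx t01])
    obtain FZ where fz: "f z = ereal FZ" using fz_le fnm[of z] by (cases "f z") auto
    have B: "FZ \<le> (1-\<tau>)*FK + \<tau>*FX - \<mu>f/2*\<tau>*(1-\<tau>)*norm(xk-x)^2" using fz_le fz by simp
    have Hf: "FX1 + norm (x1 - vx)^2/(2*(1/L)) + (\<mu>f/2 + 1/(2*(1/L))) * norm (z - x1)^2 \<le> FZ + norm (z - vx)^2/(2*(1/L))"
      using prox_strong[OF cvf \<open>\<mu>f \<ge> 0\<close> Lp _ fx1 fz] px by blast
    have Aineq: "FX1 + L/2*norm(x1 - xhat)^2 + inner y1 d + (\<mu>f+L)/2*norm(z - x1)^2
        \<le> FZ + L/2*norm(z - xhat)^2 + ((1-\<tau>)*inner uk y1 + \<tau>*inner (K *v x) y1 - inner u y1)"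
    proof -
      have i1: "inner (transpose K *v y1) (x1 - xhat) = inner y1 d" unfolding d_def by (rule transpose_inner)
      have i2: "inner (transpose K *v y1) (z - xhat) = (1-\<tau>)*inner uk y1 + \<tau>*inner (K *v x) y1 - inner u y1"
        unfolding transpose_inner z_def uk_def u_def
        by (simp add: matrix_vector_right_distrib matrix_vector_mult_diff_distrib inner_diff_right inner_add_right inner_commute matrix_vector_mult_scaleR)
      show ?thesis using Hf unfolding vx_def sq_shift_minus[OF \<open>L > 0\<close>] i1 i2 by (simp add: field_simps)
    qed
    have Hd: "GYS + norm (ys - vs)^2/(2*(1/\<beta>)) + (\<mu>g/2 + 1/(2*(1/\<beta>))) * norm (y1 - ys)^2 \<le> GY1 + norm (y1 - vs)^2/(2*(1/\<beta>))"
      using prox_strong[OF cvg \<open>\<mu>g \<ge> 0\<close> bp _ gys gy1] pys by blast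
    have D: "inner uk y1 - GY1 - \<beta>/2*norm(y1 - yd)^2 + (\<mu>g+\<beta>)/2*norm(y1 - ys)^2 \<le> inner uk ys - GYS - \<beta>/2*norm(ys - yd)^2"
      using dual_aux[OF \<open>\<beta> > 0\<close> Hd[unfolded vs_def]] unfolding uk_def .
    have IV: "\<tau>*(1-\<tau>)*norm(ys - yd)^2 \<le> (1-\<tau>)*norm(y1 - ys)^2 + \<tau>*norm(y1 - yd)^2"
    proof -
      have "0 \<le> norm ((1-\<tau>) *\<^sub>R ys + \<tau> *\<^sub>R yd - y1)^2" by simp
      also have "\<dots> = (1-\<tau>)*norm(ys-y1)^2 + \<tau>*norm(yd-y1)^2 - \<tau>*(1-\<tau>)*norm(ys-yd)^2" by (rule norm_comb_sq)
      finally show ?thesis by (simp add: norm_minus_commute)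
    qed
    define C1 where "C1 = inner u y1 - GY1 - \<beta>/2*norm(y1 - yd)^2 + inner y1 d + norm d^2/(2*(\<mu>g+\<beta>))"
    have Gx1: "g_beta g \<beta> (K *v x1) yd \<le> ereal C1"
      unfolding g_beta_def
    proof (rule SUP_least)
      fix y
      show "ereal (inner (K *v x1) y) - fconj g y - ereal (\<beta>/2 * norm (y - yd)^2) \<le> ereal C1"
      proof (cases "fconj g y")
        case (real W)
        have H: "GY1 + norm (y1 - v1)^2/(2*(1/\<beta>)) + (\<mu>g/2 + 1/(2*(1/\<beta>))) * norm (y - y1)^2 \<le> W + norm (y - v1)^2/(2*(1/\<beta>))"
          using prox_strong[OF cvg \<open>\<mu>g \<ge> 0\<close> bp _ gy1 real] py1 by blast
        have 1: "inner u y - W - \<beta>/2*norm(y - yd)^2 + (\<mu>g+\<beta>)/2 * norm (y - y1)^2 \<le> inner u y1 - GY1 - \<beta>/2*norm(y1-yd)^2"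
          using dual_aux[OF \<open>\<beta> > 0\<close> H[unfolded v1_def]] unfolding u_def .
        have 2: "inner d (y - y1) \<le> (\<mu>g+\<beta>)/2*norm (y - y1)^2 + norm d^2/(2*(\<mu>g+\<beta>))"
          using \<open>\<mu>g \<ge> 0\<close> \<open>\<beta> > 0\<close> by (intro young_inner) auto
        have 3: "K *v x1 = u + d" unfolding u_def d_def by (simp add: matrix_vector_mult_diff_distrib)
        have "inner (K *v x1) y - W - \<beta>/2 * norm (y - yd)^2 \<le> C1"
        proof -
          have e1: "inner (u + d) y = inner u y + inner d y" by (simp add: inner_add_left)
          have e2: "inner d (y - y1) = inner d y - inner d y1" by (simp add: inner_diff_right)
          have e3: "inner y1 d = inner d y1" by (simp add: inner_commute)
          show ?thesis using 1 2 unfolding 3 C1_def e1 e2 e3 by linarith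
        qed
        thus ?thesis using real by simp
      next
        case PInf then show ?thesis by simp
      next
        case MInf then show ?thesis using gsnm by simp
      qed
    qed
    define E where "E = inner uk ys - GYS - \<beta>prev/2*norm(ys - yd)^2"
    have Gp: "ereal E \<le> g_beta g \<beta>prev (K *v xk) yd"
      unfolding g_beta_def E_def uk_def
      by (rule SUP_upper2[where i=ys]) (simp_all add: gys)
    have real_ineq: "FX1 + C1 \<le> (1-\<tau>)*(FK + E) + \<tau>*(FX + inner (K *v x) y1 - GY1)
        + (L * \<tau>^2 / 2 * norm ((1 / \<tau>) *\<^sub>R (xhat - (1 - \<tau>) *\<^sub>R xk) - x) ^ 2
             - \<mu>f * (1 - \<tau>) * \<tau> / 2 * norm (x - xk) ^ 2
             - \<tau>^2 / 2 * (L + \<mu>f) * norm ((1 / \<tau>) *\<^sub>R (x1 - (1 - \<tau>) *\<^sub>R xk) - x) ^ 2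
             - L / 2 * norm (x1 - xhat) ^ 2
             + 1 / (2 * (\<mu>g + \<beta>)) * norm (K *v (x1 - xhat)) ^ 2
             - (1 - \<tau>) / 2 * (\<tau> * \<beta> - (\<beta>prev - \<beta>)) * norm (grad_g_beta g \<beta> (K *v xk) yd - yd) ^ 2)"
    proof -
      have T1: "L * \<tau>^2 / 2 * norm ((1 / \<tau>) *\<^sub>R (xhat - (1 - \<tau>) *\<^sub>R xk) - x) ^ 2 = L/2*norm(z - xhat)^2"
      proof -
        have "(1 / \<tau>) *\<^sub>R (xhat - (1 - \<tau>) *\<^sub>R xk) - x = (1/\<tau>) *\<^sub>R (xhat - z)"
          using \<open>0 < \<tau>\<close> by (simp add: z_def algebra_simps)
        thus ?thesis using \<open>0 < \<tau>\<close> by (simp add: power_mult_distrib norm_minus_commute power_divide)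
      qed
      have T2: "\<tau>^2 / 2 * (L + \<mu>f) * norm ((1 / \<tau>) *\<^sub>R (x1 - (1 - \<tau>) *\<^sub>R xk) - x) ^ 2 = (\<mu>f+L)/2*norm(z - x1)^2"
      proof -
        have "(1 / \<tau>) *\<^sub>R (x1 - (1 - \<tau>) *\<^sub>R xk) - x = (1/\<tau>) *\<^sub>R (x1 - z)"
          using \<open>0 < \<tau>\<close> by (simp add: z_def algebra_simps)
        thus ?thesis using \<open>0 < \<tau>\<close> by (simp add: power_mult_distrib norm_minus_commute power_divide)
      qed
      have T3: "1 / (2 * (\<mu>g + \<beta>)) * norm (K *v (x1 - xhat)) ^ 2 = norm d^2/(2*(\<mu>g+\<beta>))"
        unfolding d_def by simp
      have T4: "norm (x - xk) = norm (xk - x)" by (rule norm_minus_commute)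
      show ?thesis
        unfolding T1 T2 T3 T4 C1_def E_def ys_def[symmetric]
        using final_real[OF Aineq B D IV t01(2) \<open>\<beta> > 0\<close> \<open>\<mu>g \<ge> 0\<close> zero_le_power2[of "norm (y1 - ys)"], of "norm d^2" \<beta>prev]
        using add.commute[of L \<mu>f] by simp
    qed
    have lhs: "F_beta f g K \<beta> x1 yd \<le> ereal (FX1 + C1)"
      unfolding F_beta_def fx1 using add_left_mono[OF Gx1, of "ereal FX1"] by simp
    have rhs1: "ereal (1 - \<tau>) * ereal (FK + E) \<le> ereal (1 - \<tau>) * F_beta f g K \<beta>prev xk yd"
    proof (rule ereal_mult_left_mono)
      show "ereal (FK + E) \<le> F_beta f g K \<beta>prev xk yd" unfolding F_beta_def fk using add_left_mono[OF Gp, of "ereal FK"] by simp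
      show "0 \<le> ereal (1 - \<tau>)" using t01 by simp
    qed
    have lag: "Lag f g K x y1 = ereal (FX + inner (K *v x) y1 - GY1)" unfolding Lag_def fx gy1 by simp
    show ?thesis (is "?F \<le> ?P + ?Q + ereal ?S")
    proof -
      have "?F \<le> ereal ((1-\<tau>)*(FK + E) + \<tau>*(FX + inner (K *v x) y1 - GY1) + ?S)"
        using lhs real_ineq by (meson ereal_less_eq(3) order_trans)
      also have "\<dots> = ereal (1-\<tau>) * ereal (FK + E) + ereal \<tau> * ereal (FX + inner (K *v x) y1 - GY1) + ereal ?S"
        by simp
      also have "\<dots> \<le> ?P + ereal \<tau> * ereal (FX + inner (K *v x) y1 - GY1) + ereal ?S"
        using rhs1 by (intro add_right_mono)
      finally show ?thesis unfolding lag .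
    qed
  qed
qed

end
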